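(* Let $G$ be a graph with $V(G)=[n]$, $k\ge1$, $H=G^k$, and let $(P,N)=R[H]$ be the sample set defined below. Then every CNF formula consistent with $(P,N)$ has at least $\chi(H)$ clauses.
   Context: $G^k$ is the $k$-fold lexicographic product; its vertices are tuples $\vec u=(u_1,\dots,u_k)\in V(G)^k$, and $\vec u\vec v\in E(G^k)$ iff there is $i$ with $u_j=v_j$ for $j<i$ and $u_iv_i\in E(G)$. For $u\in[n]$ let $\mathrm{enc}(u)=0^{u-1}10^{n-u}\in\{0,1\}^n$, and for an edge $uv$ let $\mathrm{enc}(uv)\in\{0,1\}^n$ have 1s exactly at positions $u$ and $v$. Samples lie in $\{0,1\}^{nk}$ (variables $z(i,u)$, $i\in[k]$, $u\in[n]$, in $k$ blocks). Negative samples: $N=\{\mathrm{enc}(u_1)\cdots\mathrm{enc}(u_k):\vec u\in V(H)\}$. Positive samples: $P=\{\mathrm{enc}(u_1)\cdots\mathrm{enc}(u_{i-1})\,\mathrm{enc}(u_iv)\,\mathrm{enc}(u_{i+1})\cdots\mathrm{enc}(u_k):\vec u\in V(H),\ i\in[k],\ u_iv\in E(G)\}$. A formula is consistent if it is true on all of $P$ and false on all of $N$. $\chi$ is the chromatic number. *)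

theory Defs
  imports Main
begin

definition simple_graph_on :: "nat \<Rightarrow> (nat \<times> nat) set \<Rightarrow> bool" where
  "simple_graph_on n E \<longleftrightarrow> E \<subseteq> {1..n} \<times> {1..n} \<and> sym E \<and> (\<forall>u. (u, u) \<notin> E)"

(* Vertices of G^k: tuples (u_1,...,u_k) in [n]^k, as lists of length k
   (list position i-1 holds coordinate u_i). *)
definition lex_vertices :: "nat \<Rightarrow> nat \<Rightarrow> nat list set" where
  "lex_vertices n k = {us. length us = k \<and> set us \<subseteq> {1..n}}"

definition lex_adj :: "(nat \<times> nat) set \<Rightarrow> nat \<Rightarrow> nat list \<Rightarrow> nat list \<Rightarrow> bool" where
  "lex_adj E k us vs \<longleftrightarrow>
     (\<exists>i<k. (\<forall>j<i. us ! j = vs ! j) \<and> (us ! i, vs ! i) \<in> E)"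

definition proper_colouring :: "'v set \<Rightarrow> ('v \<Rightarrow> 'v \<Rightarrow> bool) \<Rightarrow> nat \<Rightarrow> ('v \<Rightarrow> nat) \<Rightarrow> bool" where
  "proper_colouring V adj c f \<longleftrightarrow>
     (\<forall>v\<in>V. f v < c) \<and> (\<forall>u\<in>V. \<forall>v\<in>V. adj u v \<longrightarrow> f u \<noteq> f v)"

definition chromatic_number :: "'v set \<Rightarrow> ('v \<Rightarrow> 'v \<Rightarrow> bool) \<Rightarrow> nat" where
  "chromatic_number V adj = (LEAST c. \<exists>f. proper_colouring V adj c f)"

(* Boolean variables z(i,u), i in [k], u in [n], encoded as the pair (i,u). *)
definition sample_vars :: "nat \<Rightarrow> nat \<Rightarrow> (nat \<times> nat) set" where
  "sample_vars n k = {1..k} \<times> {1..n}"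

(* A sample in {0,1}^{nk} is an assignment to the variables (value False off the variable set). *)
type_synonym assignment = "nat \<times> nat \<Rightarrow> bool"

(* CNF: a finite set of clauses; a clause is a finite set of literals (variable, polarity). *)
type_synonym literal = "(nat \<times> nat) \<times> bool"
type_synonym clause = "literal set"
type_synonym cnf = "clause set"

definition is_cnf_over :: "(nat \<times> nat) set \<Rightarrow> cnf \<Rightarrow> bool" where
  "is_cnf_over X F \<longleftrightarrow> finite F \<and> (\<forall>C\<in>F. finite C \<and> fst ` C \<subseteq> X)"

definition eval_clause :: "assignment \<Rightarrow> clause \<Rightarrow> bool" where
  "eval_clause a C \<longleftrightarrow> (\<exists>(x, b)\<in>C. a x = b)"

definition eval_cnf :: "assignment \<Rightarrow> cnf \<Rightarrow> bool" where
  "eval_cnf a F \<longleftrightarrow> (\<forall>C\<in>F. eval_clause a C)"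

(* enc(u_1)...enc(u_k): block i has a single 1 at position u_i. *)
definition neg_sample :: "nat \<Rightarrow> nat \<Rightarrow> nat list \<Rightarrow> assignment" where
  "neg_sample n k us = (\<lambda>(i, w). (i, w) \<in> sample_vars n k \<and> w = us ! (i - 1))"

(* enc(u_1)...enc(u_i v)...enc(u_k): block i additionally has a 1 at position v. *)
definition pos_sample :: "nat \<Rightarrow> nat \<Rightarrow> nat list \<Rightarrow> nat \<Rightarrow> nat \<Rightarrow> assignment" where
  "pos_sample n k us i v = (\<lambda>(j, w). (j, w) \<in> sample_vars n k \<and>
      (w = us ! (j - 1) \<or> (j = i \<and> w = v)))"

definition neg_samples :: "nat \<Rightarrow> (nat \<times> nat) set \<Rightarrow> nat \<Rightarrow> assignment set" where
  "neg_samples n E k = neg_sample n k ` lex_vertices n k"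

definition pos_samples :: "nat \<Rightarrow> (nat \<times> nat) set \<Rightarrow> nat \<Rightarrow> assignment set" where
  "pos_samples n E k = {pos_sample n k us i v | us i v.
      us \<in> lex_vertices n k \<and> i \<in> {1..k} \<and> (us ! (i - 1), v) \<in> E}"

definition consistent :: "assignment set \<Rightarrow> assignment set \<Rightarrow> cnf \<Rightarrow> bool" where
  "consistent P N F \<longleftrightarrow> (\<forall>a\<in>P. eval_cnf a F) \<and> (\<forall>a\<in>N. \<not> eval_cnf a F)"

end

theory Submission
  imports Defs
begin

lemma key:
  assumes u: "us \<in> lex_vertices n k" and v: "vs \<in> lex_vertices n k"
    and i: "i < k"
    and cu: "\<not> eval_clause (neg_sample n k us) C"
    and cv: "\<not> eval_clause (neg_sample n k vs) C"
  shows "\<not> eval_clause (pos_sample n k us (Suc i) (vs ! i)) C"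
proof
  assume "eval_clause (pos_sample n k us (Suc i) (vs ! i)) C"
  then obtain j w b where jb: "((j,w),b) \<in> C" and pe: "pos_sample n k us (Suc i) (vs ! i) (j,w) = b"
    unfolding eval_clause_def by auto
  have nu: "neg_sample n k us (j,w) \<noteq> b" using cu jb unfolding eval_clause_def by auto
  have nv: "neg_sample n k vs (j,w) \<noteq> b" using cv jb unfolding eval_clause_def by auto
  have vi: "vs ! i \<in> {1..n}" using v i unfolding lex_vertices_def by (auto dest!: nth_mem)
  show False
  proof (cases "j = Suc i \<and> w = vs ! i")
    case True
    then have "(j,w) \<in> sample_vars n k" using vi i unfolding sample_vars_def by auto
    then have "neg_sample n k vs (j,w)" using True unfolding neg_sample_def by auto
    moreover have "pos_sample n k us (Suc i) (vs ! i) (j,w)"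
      using True \<open>(j,w) \<in> sample_vars n k\<close> unfolding pos_sample_def by auto
    ultimately show False using nv pe by auto
  next
    case False
    then have "pos_sample n k us (Suc i) (vs ! i) (j,w) = neg_sample n k us (j,w)"
      unfolding pos_sample_def neg_sample_def by auto
    then show False using nu pe by auto
  qed
qed

theorem mainTheorem16:
  fixes n k :: nat and E :: "(nat \<times> nat) set" and F :: cnf
  assumes "simple_graph_on n E"
    and "k \<ge> 1"
    and "is_cnf_over (sample_vars n k) F"
    and "consistent (pos_samples n E k) (neg_samples n E k) F"
  shows "card F \<ge> chromatic_number (lex_vertices n k) (lex_adj E k)"
proof -
  have fin: "finite F" using assms(3) unfolding is_cnf_over_def by auto
  obtain h where h: "bij_betw h F {0..<card F}" using ex_bij_betw_finite_nat[OF fin] by blast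
  define cl where "cl us = (SOME C. C \<in> F \<and> \<not> eval_clause (neg_sample n k us) C)" for us
  have clp: "cl us \<in> F \<and> \<not> eval_clause (neg_sample n k us) (cl us)" if "us \<in> lex_vertices n k" for us
  proof -
    have "neg_sample n k us \<in> neg_samples n E k" using that unfolding neg_samples_def by auto
    then have "\<not> eval_cnf (neg_sample n k us) F" using assms(4) unfolding consistent_def by auto
    then have "\<exists>C. C \<in> F \<and> \<not> eval_clause (neg_sample n k us) C" unfolding eval_cnf_def by auto
    then show ?thesis unfolding cl_def by (rule someI_ex)
  qed
  have "proper_colouring (lex_vertices n k) (lex_adj E k) (card F) (\<lambda>us. h (cl us))"
    unfolding proper_colouring_def
  proof (intro conjI ballI impI)
    fix us assume "us \<in> lex_vertices n k"
    then have "cl us \<in> F" using clp by auto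
    then show "h (cl us) < card F" using h bij_betw_apply by fastforce
  next
    fix us vs assume u: "us \<in> lex_vertices n k" and v: "vs \<in> lex_vertices n k"
      and adj: "lex_adj E k us vs"
    obtain i where i: "i < k" and e: "(us ! i, vs ! i) \<in> E" using adj unfolding lex_adj_def by auto
    show "h (cl us) \<noteq> h (cl vs)"
    proof
      assume "h (cl us) = h (cl vs)"
      then have eq: "cl us = cl vs" using h clp[OF u] clp[OF v] by (metis bij_betw_imp_inj_on inj_onD)
      have ncl: "\<not> eval_clause (pos_sample n k us (Suc i) (vs ! i)) (cl us)"
        using key[OF u v i] clp[OF u] clp[OF v] eq by auto
      have "pos_sample n k us (Suc i) (vs ! i) \<in> pos_samples n E k"
        unfolding pos_samples_def using u i e by fastforce
      then have "eval_cnf (pos_sample n k us (Suc i) (vs ! i)) F" using assms(4) unfolding consistent_def by auto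
      then show False using ncl clp[OF u] unfolding eval_cnf_def by auto
    qed
  qed
  then show ?thesis unfolding chromatic_number_def by (metis Least_le)
qed

end
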